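(* Let $q$ be a prime power and $\mathcal{U}\subseteq\mathbb{P}_q(n)$ a linear code with $|\mathcal{U}|\ge 2$. Then its normalized minimum distance satisfies $\delta\le\frac12$, and $\delta=\frac12$ if and only if $\mathcal{U}$ is equidistant. In particular, the largest normalized minimum distance of a linear code in $\mathbb{P}_q(n)$ is $\frac12$.
   Context: $\mathbb{P}_q(n)$ denotes the set of all subspaces of $\mathbb{F}_q^n$. For $X,Y\in\mathbb{P}_q(n)$ the subspace distance is $d_S(X,Y)=\dim X+\dim Y-2\dim(X\cap Y)$. A linear code in $\mathbb{P}_q(n)$ is a subset $\mathcal{U}\subseteq\mathbb{P}_q(n)$ with $\{0\}\in\mathcal{U}$ for which there exists a map $\boxplus:\mathcal{U}\times\mathcal{U}\to\mathcal{U}$ such that (i) $(\mathcal{U},\boxplus)$ is an abelian group; (ii) its identity element is $\{0\}$; (iii) $X\boxplus X=\{0\}$ for all $X\in\mathcal{U}$; (iv) $d_S(Y_1\boxplus X,Y_2\boxplus X)=d_S(Y_1,Y_2)$ for all $Y_1,Y_2,X\in\mathcal{U}$. A linear code is equidistant if there is $r$ with $d_S(X,Y)=r$ for all distinct $X,Y\in\mathcal{U}$. With $d=\min\{d_S(X,Y):X,Y\in\mathcal{U},X\ne Y\}$ (the minimum distance) and $l=\max_{X\in\mathcal{U}}\dim X$, the normalized minimum distance is $\delta=d/(2l)$. *)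

theory Defs
  imports "HOL-Analysis.Analysis"
begin

text \<open>Ambient space: F_q^n rendered as 'a^'n with 'a a finite field (so |'a| = q is a prime power)
  and 'n a finite index type with CARD('n) = n.  Subspaces, dimension: the vector-space structure
  given by the scalar multiplication (*s) (interpretation vec of Cartesian_Space).\<close>

definition proj_space :: "(('a::{field,finite})^'n) set set" where
  "proj_space = {X. vec.subspace X}"

definition subspace_dist :: "(('a::{field,finite})^'n) set \<Rightarrow> ('a^'n) set \<Rightarrow> nat" where
  "subspace_dist X Y = vec.dim X + vec.dim Y - 2 * vec.dim (X \<inter> Y)"

definition linear_code :: "(('a::{field,finite})^'n) set set \<Rightarrow> bool" where
  "linear_code U \<longleftrightarrow> U \<subseteq> proj_space \<and> {0} \<in> U \<and>
     (\<exists>f :: ('a^'n) set \<Rightarrow> ('a^'n) set \<Rightarrow> ('a^'n) set.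
        (\<forall>X\<in>U. \<forall>Y\<in>U. f X Y \<in> U) \<and>
        (\<forall>X\<in>U. \<forall>Y\<in>U. \<forall>Z\<in>U. f (f X Y) Z = f X (f Y Z)) \<and>
        (\<forall>X\<in>U. \<forall>Y\<in>U. f X Y = f Y X) \<and>
        (\<forall>X\<in>U. f {0} X = X \<and> f X {0} = X) \<and>
        (\<forall>X\<in>U. \<exists>Y\<in>U. f X Y = {0}) \<and>
        (\<forall>X\<in>U. f X X = {0}) \<and>
        (\<forall>Y1\<in>U. \<forall>Y2\<in>U. \<forall>X\<in>U. subspace_dist (f Y1 X) (f Y2 X) = subspace_dist Y1 Y2))"

definition equidistant :: "(('a::{field,finite})^'n) set set \<Rightarrow> bool" where
  "equidistant U \<longleftrightarrow> (\<exists>r. \<forall>X\<in>U. \<forall>Y\<in>U. X \<noteq> Y \<longrightarrow> subspace_dist X Y = r)"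

definition min_dist :: "(('a::{field,finite})^'n) set set \<Rightarrow> nat" where
  "min_dist U = Min {subspace_dist X Y | X Y. X \<in> U \<and> Y \<in> U \<and> X \<noteq> Y}"

definition max_dim :: "(('a::{field,finite})^'n) set set \<Rightarrow> nat" where
  "max_dim U = Max (vec.dim ` U)"

definition norm_min_dist :: "(('a::{field,finite})^'n) set set \<Rightarrow> real" where
  "norm_min_dist U = real (min_dist U) / (2 * real (max_dim U))"

end

theory Submission
  imports Defs
begin

lemma dist_zero:
  fixes X :: "('a::{field,finite}^'n) set"
  assumes "vec.subspace X"
  shows "subspace_dist X {0} = vec.dim X"
proof -
  have "X \<inter> {0} = {0}" using assms vec.subspace_0 by blast
  then show ?thesis unfolding subspace_dist_def by simp
qed

lemma dim_pos:
  fixes X :: "('a::{field,finite}^'n) set"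
  assumes "vec.subspace X" "X \<noteq> {0}"
  shows "vec.dim X > 0"
proof -
  have "0 \<in> X" using assms vec.subspace_0 by blast
  then have "\<not> X \<subseteq> {0}" using assms by blast
  then show ?thesis using vec.dim_eq_0 by auto
qed

lemma main:
  fixes U :: "(('a::{field,finite})^'n) set set"
  assumes lc: "linear_code U" and c2: "card U \<ge> 2"
  shows "norm_min_dist U \<le> 1/2 \<and> (norm_min_dist U = 1/2 \<longleftrightarrow> equidistant U)"
proof -
  obtain f where sub: "U \<subseteq> proj_space" and z: "{0} \<in> U"
    and cl: "\<forall>X\<in>U. \<forall>Y\<in>U. f X Y \<in> U"
    and asc: "\<forall>X\<in>U. \<forall>Y\<in>U. \<forall>Z\<in>U. f (f X Y) Z = f X (f Y Z)"
    and idl: "\<forall>X\<in>U. f {0} X = X \<and> f X {0} = X"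
    and sq: "\<forall>X\<in>U. f X X = {0}"
    and inv: "\<forall>Y1\<in>U. \<forall>Y2\<in>U. \<forall>X\<in>U. subspace_dist (f Y1 X) (f Y2 X) = subspace_dist Y1 Y2"
    using lc unfolding linear_code_def
    apply (elim conjE exE)
    apply (rule that)
    by assumption+
  have subs: "\<And>X. X \<in> U \<Longrightarrow> vec.subspace X" using sub unfolding proj_space_def by blast
  have fin: "finite U" using c2 card.infinite by fastforce
  obtain X0 where X0: "X0 \<in> U" "X0 \<noteq> {0}"
  proof -
    have "U - {{0}} \<noteq> {}"
    proof
      assume "U - {{0}} = {}"
      then have "U \<subseteq> {{0}}" by blast
      then have "card U \<le> 1" using card_mono[of "{{0}}" U] by simp
      then show False using c2 by simp
    qed
    then show ?thesis using that by blast
  qed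
  define D where "D = {subspace_dist X Y | X Y. X \<in> U \<and> Y \<in> U \<and> X \<noteq> Y}"
  have "D \<subseteq> (\<lambda>p. subspace_dist (fst p) (snd p)) ` (U \<times> U)" unfolding D_def by force
  then have Dfin: "finite D" using fin by (meson finite_SigmaI finite_imageI finite_subset)
  have md: "min_dist U = Min D" unfolding min_dist_def D_def by simp
  have Dle: "\<And>x. x \<in> D \<Longrightarrow> min_dist U \<le> x" using md Dfin by simp
  have dimfin: "finite (vec.dim ` U)" using fin by simp
  have dimle: "\<And>X. X \<in> U \<Longrightarrow> vec.dim X \<le> max_dim U" unfolding max_dim_def using dimfin by simp
  obtain Xm where Xm: "Xm \<in> U" "vec.dim Xm = max_dim U"
    unfolding max_dim_def using dimfin X0 by (metis Max_in empty_iff image_iff)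
  have l0: "max_dim U > 0" using dim_pos[OF subs[OF X0(1)] X0(2)] dimle[OF X0(1)] by linarith
  have Xm0: "Xm \<noteq> {0}" using Xm l0 by auto
  have "subspace_dist Xm {0} \<in> D" unfolding D_def using Xm Xm0 z by blast
  then have dl: "min_dist U \<le> max_dim U" using Dle dist_zero[OF subs[OF Xm(1)]] Xm by simp
  have nz: "\<And>X. X \<in> U \<Longrightarrow> X \<noteq> {0} \<Longrightarrow> min_dist U \<le> vec.dim X"
  proof -
    fix X assume "X \<in> U" "X \<noteq> {0}"
    then have "subspace_dist X {0} \<in> D" unfolding D_def using z by blast
    then show "min_dist U \<le> vec.dim X" using Dle dist_zero subs \<open>X \<in> U\<close> by metis
  qed
  have eq: "norm_min_dist U = 1/2 \<longleftrightarrow> min_dist U = max_dim U"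
    unfolding norm_min_dist_def using l0 by (auto simp: field_simps)
  have le: "norm_min_dist U \<le> 1/2"
    unfolding norm_min_dist_def using l0 dl by (auto simp: field_simps)
  have "min_dist U = max_dim U \<longleftrightarrow> equidistant U"
  proof
    assume h: "min_dist U = max_dim U"
    have alld: "\<And>X. X \<in> U \<Longrightarrow> X \<noteq> {0} \<Longrightarrow> vec.dim X = max_dim U"
      using nz dimle h by (metis le_antisym)
    show "equidistant U" unfolding equidistant_def
    proof (intro exI ballI impI)
      fix X Y assume XY: "X \<in> U" "Y \<in> U" "X \<noteq> Y"
      have fU: "f X Y \<in> U" using cl XY by blast
      have "f X Y \<noteq> {0}"
      proof
        assume h0: "f X Y = {0}"
        have "X = f X (f Y Y)" using sq idl XY by simp
        also have "\<dots> = f (f X Y) Y" using asc XY by simp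
        also have "\<dots> = Y" using h0 idl XY by simp
        finally show False using XY by simp
      qed
      have "subspace_dist X Y = subspace_dist (f X Y) (f Y Y)" using inv XY by simp
      also have "\<dots> = subspace_dist (f X Y) {0}" using sq XY by simp
      also have "\<dots> = vec.dim (f X Y)" using dist_zero subs fU by blast
      also have "\<dots> = max_dim U" using alld fU \<open>f X Y \<noteq> {0}\<close> by blast
      finally show "subspace_dist X Y = max_dim U" .
    qed
  next
    assume "equidistant U"
    then obtain r where r: "\<forall>X\<in>U. \<forall>Y\<in>U. X \<noteq> Y \<longrightarrow> subspace_dist X Y = r"
      unfolding equidistant_def by blast
    have dr: "\<And>X. X \<in> U \<Longrightarrow> X \<noteq> {0} \<Longrightarrow> vec.dim X = r"
      using r z dist_zero subs by metis
    have "D = {r}"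
    proof
      show "D \<subseteq> {r}" unfolding D_def using r by blast
      have "subspace_dist X0 {0} \<in> D" unfolding D_def using X0 z by blast
      then show "{r} \<subseteq> D" using r X0 z by auto
    qed
    then have "min_dist U = r" using md by simp
    moreover have "max_dim U = r" using dr Xm Xm0 by simp
    ultimately show "min_dist U = max_dim U" by simp
  qed
  then show ?thesis using le eq by simp
qed

lemma exists_code:
  "\<exists>V :: (('a::{field,finite})^'n) set set. linear_code V \<and> card V \<ge> 2 \<and> equidistant V"
proof -
  obtain i :: 'n where True by blast
  have "axis i (1::'a) \<noteq> 0" by (simp add: vec_eq_iff axis_def)
  then have U0: "(UNIV :: ('a^'n) set) \<noteq> {0}" by blast
  define V :: "('a^'n) set set" where "V = {{0}, UNIV}"
  define f :: "('a^'n) set \<Rightarrow> ('a^'n) set \<Rightarrow> ('a^'n) set" where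
    "f = (\<lambda>X Y. if X = {0} then Y else if Y = {0} then X else {0})"
  have lc: "linear_code V" unfolding linear_code_def
  proof (intro conjI exI[of _ f])
    show "V \<subseteq> proj_space" unfolding V_def proj_space_def
      using vec.subspace_UNIV vec.subspace_single_0 by auto
    show "{0} \<in> V" unfolding V_def by simp
    show "\<forall>Y1\<in>V. \<forall>Y2\<in>V. \<forall>X\<in>V. subspace_dist (f Y1 X) (f Y2 X) = subspace_dist Y1 Y2"
      unfolding V_def f_def using U0 by (auto simp: subspace_dist_def)
  qed (auto simp: V_def f_def U0)
  have "card V = 2" unfolding V_def using U0 by simp
  moreover have "equidistant V" unfolding equidistant_def V_def
    by (rule exI[of _ "subspace_dist {0} UNIV"]) (auto simp: subspace_dist_def Int_commute)
  ultimately show ?thesis using lc by auto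
qed

theorem corollary1:
  fixes U :: "(('a::{field,finite})^'n) set set"
  assumes "linear_code U" and "card U \<ge> 2"
  shows "norm_min_dist U \<le> 1/2 \<and> (norm_min_dist U = 1/2 \<longleftrightarrow> equidistant U) \<and>
         Max {norm_min_dist V | V :: (('a::{field,finite})^'n) set set. linear_code V \<and> card V \<ge> 2} = 1/2"
proof -
  let ?S = "{norm_min_dist V | V :: (('a::{field,finite})^'n) set set. linear_code V \<and> card V \<ge> 2}"
  have fin: "finite ?S"
    using finite_image_set[of "\<lambda>V. linear_code V \<and> card V \<ge> 2" norm_min_dist] by simp
  obtain V :: "(('a::{field,finite})^'n) set set" where V: "linear_code V" "card V \<ge> 2" "equidistant V"
    using exists_code by blast
  have "1/2 \<in> ?S" using main[OF V(1,2)] V by fastforce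
  moreover have "\<forall>x\<in>?S. x \<le> 1/2" using main by blast
  ultimately have "Max ?S = 1/2" using fin by (meson Max_eqI)
  then show ?thesis using main[OF assms] by simp
qed

end
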